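(* Let $N\ge c\geq 2$ and let $\Gamma$ be the $c$-complete hypergraph on $N$ vertices. Then the spectrum of its (signless) normalized Laplacian is given by $\frac{N-c}{N-1}$, with multiplicity $N-1$, and $c$, with multiplicity $1$.
   Context: A hypergraph $\Gamma=(\mathcal{V},\mathcal{H})$ has a finite vertex set $\mathcal{V}=\{v_1,\ldots,v_N\}$ and a set $\mathcal{H}$ of nonempty subsets of $\mathcal{V}$ (hyperedges). $\deg(v)$ is the number of hyperedges containing $v$, $D$ the diagonal degree matrix, $A$ the matrix with $A_{ii}=0$ and $A_{ij}=-\#\{h\in\mathcal{H}: v_i,v_j\in h\}$ for $i\ne j$, and the (signless) normalized Laplacian is $L=\mathrm{Id}-D^{-1}A$. The $c$-complete hypergraph on $N$ vertices is the hypergraph whose hyperedges are all $\binom{N}{c}$ subsets of $\mathcal{V}$ of cardinality $c$. *)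

theory Defs
  imports "Jordan_Normal_Form.Char_Poly"
begin

text \<open>A hypergraph on the vertex set {0..<N} (vertex v_i is index i) with
 hyperedge set H, a set of nonempty subsets of {0..<N}.\<close>

definition hdeg :: "nat set set \<Rightarrow> nat \<Rightarrow> nat" where
  "hdeg H i = card {h \<in> H. i \<in> h}"

definition hdeg_mat :: "nat \<Rightarrow> nat set set \<Rightarrow> real mat" where
  "hdeg_mat N H = mat N N (\<lambda>(i,j). if i = j then real (hdeg H i) else 0)"

definition hadj_mat :: "nat \<Rightarrow> nat set set \<Rightarrow> real mat" where
  "hadj_mat N H = mat N N (\<lambda>(i,j). if i = j then 0
       else - real (card {h \<in> H. i \<in> h \<and> j \<in> h}))"

definition hlaplacian :: "nat \<Rightarrow> nat set set \<Rightarrow> real mat" where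
  "hlaplacian N H = 1\<^sub>m N - (mat N N (\<lambda>(i,j). if i = j then 1 / real (hdeg H i) else 0)) * hadj_mat N H"

definition complete_hyperedges :: "nat \<Rightarrow> nat \<Rightarrow> nat set set" where
  "complete_hyperedges N c = {S. S \<subseteq> {0..<N} \<and> card S = c}"

end

theory Submission imports Defs begin

lemma sum_restrict:
  fixes N :: nat
  assumes "S \<subseteq> {0..<N}" "\<And>k. k < N \<Longrightarrow> k \<notin> S \<Longrightarrow> f k = 0"
  shows "(\<Sum>k\<in>{0..<N}. f k) = (\<Sum>k\<in>S. f k)"
  by (rule sum.mono_neutral_right) (use assms in auto)

lemma char_poly_J:
  fixes t :: real
  assumes N: "N \<ge> 1"
  shows "char_poly (mat N N (\<lambda>(i,j). if i = j then 1 else t)) =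
     [: -(1 - t), 1 :] ^ (N - 1) * [: -(1 + t * real (N - 1)), 1 :]"
proof -
  define L where "L = mat N N (\<lambda>(i,j). if i = j then 1 else t)"
  define P :: "real mat" where "P = mat N N (\<lambda>(i,j). if i = j then 1 else if j = 0 then 1 else 0)"
  define Q :: "real mat" where "Q = mat N N (\<lambda>(i,j). if i = j then 1 else if j = 0 then -1 else 0)"
  define B where "B = mat N N (\<lambda>(i,j). if i = 0 then (if j = 0 then 1 + t * real (N - 1) else t)
      else if i = j then 1 - t else 0)"
  have carr: "L \<in> carrier_mat N N" "P \<in> carrier_mat N N" "Q \<in> carrier_mat N N" "B \<in> carrier_mat N N"
    unfolding L_def P_def Q_def B_def by auto
  have PQ: "P * Q = 1\<^sub>m N"
  proof (rule eq_matI)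
    fix i j assume ij: "i < dim_row (1\<^sub>m N)" "j < dim_col (1\<^sub>m N)"
    have "(P * Q) $$ (i,j) = (\<Sum>k\<in>{0..<N}. P $$ (i,k) * Q $$ (k,j))"
      using ij carr by (simp add: scalar_prod_def)
    also have "\<dots> = (\<Sum>k\<in>{0,i}. P $$ (i,k) * Q $$ (k,j))"
      by (rule sum_restrict) (use ij in \<open>auto simp: P_def\<close>)
    also have "\<dots> = 1\<^sub>m N $$ (i,j)"
      using ij N by (cases "i = 0") (auto simp: P_def Q_def)
    finally show "(P * Q) $$ (i,j) = 1\<^sub>m N $$ (i,j)" .
  qed (use carr in auto)
  have QP: "Q * P = 1\<^sub>m N"
  proof (rule eq_matI)
    fix i j assume ij: "i < dim_row (1\<^sub>m N)" "j < dim_col (1\<^sub>m N)"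
    have "(Q * P) $$ (i,j) = (\<Sum>k\<in>{0..<N}. Q $$ (i,k) * P $$ (k,j))"
      using ij carr by (simp add: scalar_prod_def)
    also have "\<dots> = (\<Sum>k\<in>{0,i}. Q $$ (i,k) * P $$ (k,j))"
      by (rule sum_restrict) (use ij in \<open>auto simp: Q_def\<close>)
    also have "\<dots> = 1\<^sub>m N $$ (i,j)"
      using ij N by (cases "i = 0") (auto simp: P_def Q_def)
    finally show "(Q * P) $$ (i,j) = 1\<^sub>m N $$ (i,j)" .
  qed (use carr in auto)
  have LP: "L * P = P * B"
  proof (rule eq_matI)
    fix i j assume ij: "i < dim_row (P * B)" "j < dim_col (P * B)"
    hence ij': "i < N" "j < N" using carr by auto
    have rhs: "(P * B) $$ (i,j) = (\<Sum>k\<in>{0..<N}. P $$ (i,k) * B $$ (k,j))"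
      using ij' carr by (simp add: scalar_prod_def)
    also have "\<dots> = (\<Sum>k\<in>{0,i}. P $$ (i,k) * B $$ (k,j))"
      by (rule sum_restrict) (use ij' in \<open>auto simp: P_def\<close>)
    finally have r: "(P * B) $$ (i,j) = (\<Sum>k\<in>{0,i}. P $$ (i,k) * B $$ (k,j))" .
    have l: "(L * P) $$ (i,j) = (\<Sum>k\<in>{0..<N}. L $$ (i,k) * P $$ (k,j))"
      using ij' carr by (simp add: scalar_prod_def)
    show "(L * P) $$ (i,j) = (P * B) $$ (i,j)"
    proof (cases "j = 0")
      case True
      have "(\<Sum>k\<in>{0..<N}. L $$ (i,k) * P $$ (k,j)) = (\<Sum>k\<in>{0..<N}. if k = i then 1 else t)"
        using True ij' by (intro sum.cong) (auto simp: L_def P_def)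
      also have "\<dots> = (\<Sum>k\<in>insert i ({0..<N} - {i}). if k = i then 1 else t)"
        using ij' by (intro sum.cong) auto
      also have "\<dots> = 1 + t * real (N - 1)"
        using ij' by (subst sum.insert) auto
      finally show ?thesis using l r True ij' by (cases "i = 0") (auto simp: P_def B_def)
    next
      case False
      have "(\<Sum>k\<in>{0..<N}. L $$ (i,k) * P $$ (k,j)) = (\<Sum>k\<in>{j}. L $$ (i,k) * P $$ (k,j))"
        by (rule sum_restrict) (use ij' False in \<open>auto simp: P_def\<close>)
      then show ?thesis using l r False ij' by (cases "i = 0") (auto simp: P_def B_def L_def)
    qed
  qed (use carr in auto)
  have "L = L * (P * Q)" using carr PQ by simp
  also have "\<dots> = (L * P) * Q" using carr by (simp add: assoc_mult_mat)
  also have "\<dots> = P * B * Q" using LP by simp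
  finally have "similar_mat L B"
    by (intro similar_matI[where n=N and P=P and Q=Q]) (use carr PQ QP in auto)
  hence "char_poly L = char_poly B" by (rule char_poly_similar)
  also have "\<dots> = (\<Prod>a\<leftarrow>diag_mat B. [:- a, 1:])"
    by (rule char_poly_upper_triangular[OF carr(4)]) (auto simp: upper_triangular_def B_def)
  also have "diag_mat B = (1 + t * real (N - 1)) # map (\<lambda>_. 1 - t) [1..<N]"
    using N unfolding diag_mat_def B_def by (auto simp: upt_conv_Cons)
  also have "(\<Prod>a\<leftarrow>(1 + t * real (N - 1)) # map (\<lambda>_. 1 - t) [1..<N]. [:- a, 1:]) =
     [: -(1 + t * real (N - 1)), 1 :] * [: -(1 - t), 1 :] ^ (N - 1)"
    by (simp add: map_replicate_const)
  finally show ?thesis unfolding L_def by (simp add: mult.commute)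
qed

lemma card_supsets:
  fixes A X :: "nat set"
  assumes A: "finite A" and XA: "X \<subseteq> A" and Xc: "card X \<le> c"
  shows "card {S. S \<subseteq> A \<and> card S = c \<and> X \<subseteq> S} = (card A - card X) choose (c - card X)"
proof -
  have fX: "finite X" using A XA finite_subset by blast
  have "(\<lambda>T. T \<union> X) ` {T. T \<subseteq> A - X \<and> card T = c - card X} = {S. S \<subseteq> A \<and> card S = c \<and> X \<subseteq> S}"
  proof (intro equalityI subsetI)
    fix S assume "S \<in> (\<lambda>T. T \<union> X) ` {T. T \<subseteq> A - X \<and> card T = c - card X}"
    then obtain T where T: "T \<subseteq> A - X" "card T = c - card X" "S = T \<union> X" by auto
    have fT: "finite T" using T(1) A finite_subset by blast
    have "card S = card T + card X" using T fT fX card_Un_disjoint[of T X] by auto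
    then show "S \<in> {S. S \<subseteq> A \<and> card S = c \<and> X \<subseteq> S}" using T XA Xc by auto
  next
    fix S assume S: "S \<in> {S. S \<subseteq> A \<and> card S = c \<and> X \<subseteq> S}"
    have fS: "finite S" using S A finite_subset by blast
    have "card (S - X) = c - card X" using S fS by (simp add: card_Diff_subset fX)
    moreover have "S = (S - X) \<union> X" using S by auto
    ultimately show "S \<in> (\<lambda>T. T \<union> X) ` {T. T \<subseteq> A - X \<and> card T = c - card X}"
      using S by blast
  qed
  moreover have "inj_on (\<lambda>T. T \<union> X) {T. T \<subseteq> A - X \<and> card T = c - card X}"
    by (rule inj_onI) blast
  ultimately have "card {S. S \<subseteq> A \<and> card S = c \<and> X \<subseteq> S} = card {T. T \<subseteq> A - X \<and> card T = c - card X}"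
    using card_image by fastforce
  also have "\<dots> = card (A - X) choose (c - card X)"
    using A by (intro n_subsets) auto
  finally show ?thesis using card_Diff_subset[OF fX XA] by simp
qed

lemma hlap_complete:
  fixes N c :: nat
  assumes "2 \<le> c" and "c \<le> N"
  shows "hlaplacian N (complete_hyperedges N c) =
     mat N N (\<lambda>(i,j). if i = j then 1 else real (c - 1) / real (N - 1))"
proof -
  let ?H = "complete_hyperedges N c"
  have deg: "hdeg ?H i = (N - 1) choose (c - 1)" if "i < N" for i
  proof -
    have "hdeg ?H i = card {S. S \<subseteq> {0..<N} \<and> card S = c \<and> {i} \<subseteq> S}"
      unfolding hdeg_def complete_hyperedges_def by (rule arg_cong[where f=card]) auto
    also have "\<dots> = (N - 1) choose (c - 1)"
      using that assms by (subst card_supsets) auto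
    finally show ?thesis .
  qed
  have pair: "card {h \<in> ?H. i \<in> h \<and> j \<in> h} = (N - 2) choose (c - 2)"
    if "i < N" "j < N" "i \<noteq> j" for i j
  proof -
    have "card {h \<in> ?H. i \<in> h \<and> j \<in> h} = card {S. S \<subseteq> {0..<N} \<and> card S = c \<and> {i,j} \<subseteq> S}"
      unfolding complete_hyperedges_def by (rule arg_cong[where f=card]) auto
    also have "\<dots> = (N - 2) choose (c - 2)"
      proof -
        have "card {i,j} = 2" using that by simp
        have X: "card {S. S \<subseteq> {0..<N} \<and> card S = c \<and> {i,j} \<subseteq> S}
           = (card {0..<N} - card {i,j}) choose (c - card {i,j})"
          by (rule card_supsets) (use that assms \<open>card {i,j} = 2\<close> in auto)
        show ?thesis unfolding X \<open>card {i,j} = 2\<close> card_atLeastLessThan by simp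
      qed
    finally show ?thesis .
  qed
  have ratio: "real ((N - 2) choose (c - 2)) / real ((N - 1) choose (c - 1)) = real (c - 1) / real (N - 1)"
  proof -
    define m where "m = N - 2"
    define k where "k = c - 2"
    have mk: "N - 1 = Suc m" "c - 1 = Suc k" "N - 2 = m" "c - 2 = k"
      unfolding m_def k_def using assms by arith+
    have pos: "(Suc m choose Suc k) > 0" using assms mk by (intro zero_less_binomial) linarith
    have e: "real (Suc m) * real (m choose k) = real (Suc m choose Suc k) * real (Suc k)"
      using Suc_times_binomial_eq[of m k] by (metis of_nat_mult)
    have g: "x / y = a / b" if "b * x = y * a" "y > 0" "b > 0" for x y a b :: real
      using that by (simp add: field_simps)
    have pos': "real (Suc m choose Suc k) > 0" using pos by (simp only: of_nat_0_less_iff)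
    show ?thesis unfolding mk by (rule g[OF e pos']) simp
  qed
  have ratio': "real ((N - 2) choose (c - 2)) / real ((N - Suc 0) choose (c - Suc 0)) = real (c - Suc 0) / (real N - 1)"
    using ratio assms by (simp add: of_nat_diff)
  show ?thesis
  proof (rule eq_matI)
    fix i j assume ij: "i < dim_row (mat N N (\<lambda>(i,j). if i = j then 1 else real (c - 1) / real (N - 1)))"
      "j < dim_col (mat N N (\<lambda>(i,j). if i = j then 1 else real (c - 1) / real (N - 1)))"
    hence ij': "i < N" "j < N" by auto
    let ?D = "mat N N (\<lambda>(i,j). if i = j then 1 / real (hdeg ?H i) else 0)"
    have "(?D * hadj_mat N ?H) $$ (i,j) = (\<Sum>k\<in>{0..<N}. ?D $$ (i,k) * hadj_mat N ?H $$ (k,j))"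
      using ij' by (simp add: scalar_prod_def hadj_mat_def)
    also have "\<dots> = (\<Sum>k\<in>{i}. ?D $$ (i,k) * hadj_mat N ?H $$ (k,j))"
      by (rule sum_restrict) (use ij' in auto)
    finally have e: "(?D * hadj_mat N ?H) $$ (i,j) = ?D $$ (i,i) * hadj_mat N ?H $$ (i,j)" by simp
    show "hlaplacian N ?H $$ (i,j) = mat N N (\<lambda>(i,j). if i = j then 1 else real (c - 1) / real (N - 1)) $$ (i,j)"
      unfolding hlaplacian_def using ij' e
      by (auto simp: hadj_mat_def deg pair ratio')
  qed (auto simp: hlaplacian_def hadj_mat_def)
qed

theorem mainTheorem8:
  fixes N c :: nat
  assumes "2 \<le> c" and "c \<le> N"
  shows "char_poly (hlaplacian N (complete_hyperedges N c)) =
           [: - (real (N - c) / real (N - 1)), 1 :] ^ (N - 1) * [: - real c, 1 :]"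
proof -
  have N: "N \<ge> 1" "real (N - 1) > 0" using assms by auto
  have a: "1 - real (c - 1) / real (N - 1) = real (N - c) / real (N - 1)"
    using N assms by (simp add: field_simps of_nat_diff)
  have b: "1 + real (c - 1) / real (N - 1) * real (N - 1) = real c"
    using N assms by (simp add: of_nat_diff)
  show ?thesis unfolding hlap_complete[OF assms] char_poly_J[OF N(1)] a b ..
qed

end
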